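(* Let $L:\mathbb{R}^d\to\mathbb{R}^{\mathcal{Y}}_+$ be a polyhedral loss and $\gamma$ a property. Then $L$ indirectly elicits $\gamma$ if and only if $L$ tightly embeds some discrete loss $\ell$ that indirectly elicits $\gamma$.
   Context: $\mathcal{Y}$ is a finite label set, $\Delta_{\mathcal{Y}}$ the simplex, $\mathbb{R}^{\mathcal{Y}}_+$ the nonnegative orthant. A property $\gamma:\Delta_{\mathcal{Y}}\rightrightarrows\mathcal{R}'$ maps each $p$ to a nonempty subset of $\mathcal{R}'$, with level sets $\gamma_r=\{p:r\in\gamma(p)\}$. A loss $L:\mathcal{R}\to\mathbb{R}^{\mathcal{Y}}_+$ is minimizable if $\inf_r\langle p,L(r)\rangle$ is attained for all $p$; then $\Gamma=\mathrm{prop}[L]$, $\Gamma(p)=\arg\min_r\langle p,L(r)\rangle$. Discrete: finite report set. Polyhedral: $L:\mathbb{R}^d\to\mathbb{R}^{\mathcal{Y}}_+$ with each coordinate a max of finitely many affine functions (such losses are minimizable). A minimizable loss with report set $\mathcal{R}$ indirectly elicits $\gamma$ if for every $r\in\mathcal{R}$ there is $r'\in\mathcal{R}'$ with $\Gamma_r\subseteq\gamma_{r'}$. $\mathcal{S}$ is representative for $\ell$ if $\mathrm{prop}[\ell](p)\cap\mathcal{S}\neq\emptyset$ for all $p$, minimum representative if of smallest cardinality. $L$ embeds $\ell$ if there exist a representative set $\mathcal{S}$ for $\ell$ and injective $\varphi:\mathcal{S}\to\mathbb{R}^d$ with $L(\varphi(r))=\ell(r)$ for $r\in\mathcal{S}$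 and $r\in\mathrm{prop}[\ell](p)\iff\varphi(r)\in\mathrm{prop}[L](p)$ for all $p$, $r\in\mathcal{S}$; tightly if $\mathcal{S}$ can be taken minimum representative. *)

theory Defs
  imports "HOL-Analysis.Analysis"
begin

definition prob_simplex :: "('y::finite \<Rightarrow> real) set" where
  "prob_simplex = {p. (\<forall>y. 0 \<le> p y) \<and> (\<Sum>y\<in>UNIV. p y) = 1}"

definition exp_loss :: "('y::finite \<Rightarrow> real) \<Rightarrow> ('y \<Rightarrow> real) \<Rightarrow> real" where
  "exp_loss p v = (\<Sum>y\<in>UNIV. p y * v y)"

definition is_property :: "(('y::finite \<Rightarrow> real) \<Rightarrow> 'b set) \<Rightarrow> bool" where
  "is_property \<gamma> \<longleftrightarrow> (\<forall>p\<in>prob_simplex. \<gamma> p \<noteq> {})"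

definition level_set :: "(('y::finite \<Rightarrow> real) \<Rightarrow> 'b set) \<Rightarrow> 'b \<Rightarrow> ('y \<Rightarrow> real) set" where
  "level_set \<gamma> r = {p\<in>prob_simplex. r \<in> \<gamma> p}"

definition minimizable :: "('r \<Rightarrow> ('y::finite \<Rightarrow> real)) \<Rightarrow> 'r set \<Rightarrow> bool" where
  "minimizable L R \<longleftrightarrow> (\<forall>p\<in>prob_simplex. \<exists>r\<in>R. \<forall>r'\<in>R. exp_loss p (L r) \<le> exp_loss p (L r'))"

definition prop_of :: "('r \<Rightarrow> ('y::finite \<Rightarrow> real)) \<Rightarrow> 'r set \<Rightarrow> ('y \<Rightarrow> real) \<Rightarrow> 'r set" where
  "prop_of L R p = {r\<in>R. \<forall>r'\<in>R. exp_loss p (L r) \<le> exp_loss p (L r')}"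

definition indirectly_elicits ::
  "('r \<Rightarrow> ('y::finite \<Rightarrow> real)) \<Rightarrow> 'r set \<Rightarrow> (('y \<Rightarrow> real) \<Rightarrow> 'b set) \<Rightarrow> bool" where
  "indirectly_elicits L R \<gamma> \<longleftrightarrow> minimizable L R \<and>
     (\<forall>r\<in>R. \<exists>r'. level_set (prop_of L R) r \<subseteq> level_set \<gamma> r')"

definition nonneg_loss :: "('r \<Rightarrow> ('y \<Rightarrow> real)) \<Rightarrow> 'r set \<Rightarrow> bool" where
  "nonneg_loss L R \<longleftrightarrow> (\<forall>r\<in>R. \<forall>y. 0 \<le> L r y)"

definition discrete_loss :: "('r \<Rightarrow> ('y \<Rightarrow> real)) \<Rightarrow> 'r set \<Rightarrow> bool" where
  "discrete_loss l R \<longleftrightarrow> finite R \<and> R \<noteq> {} \<and> nonneg_loss l R"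

definition polyhedral :: "(real^'d \<Rightarrow> ('y \<Rightarrow> real)) \<Rightarrow> bool" where
  "polyhedral L \<longleftrightarrow> nonneg_loss L UNIV \<and>
     (\<forall>y. \<exists>A :: ((real^'d) \<times> real) set. finite A \<and> A \<noteq> {} \<and>
          (\<forall>u. L u y = Max ((\<lambda>(a, b). a \<bullet> u + b) ` A)))"

definition representative :: "('r \<Rightarrow> ('y::finite \<Rightarrow> real)) \<Rightarrow> 'r set \<Rightarrow> 'r set \<Rightarrow> bool" where
  "representative l R S \<longleftrightarrow> S \<subseteq> R \<and> (\<forall>p\<in>prob_simplex. prop_of l R p \<inter> S \<noteq> {})"

definition min_representative :: "('r \<Rightarrow> ('y::finite \<Rightarrow> real)) \<Rightarrow> 'r set \<Rightarrow> 'r set \<Rightarrow> bool" where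
  "min_representative l R S \<longleftrightarrow> representative l R S \<and> finite S \<and>
     (\<forall>S'. representative l R S' \<longrightarrow> card S \<le> card S')"

definition embeds_via ::
  "(real^'d \<Rightarrow> ('y::finite \<Rightarrow> real)) \<Rightarrow> ('r \<Rightarrow> ('y \<Rightarrow> real)) \<Rightarrow> 'r set \<Rightarrow> 'r set \<Rightarrow> ('r \<Rightarrow> real^'d) \<Rightarrow> bool" where
  "embeds_via L l R S \<phi> \<longleftrightarrow> inj_on \<phi> S \<and> (\<forall>r\<in>S. L (\<phi> r) = l r) \<and>
     (\<forall>p\<in>prob_simplex. \<forall>r\<in>S. r \<in> prop_of l R p \<longleftrightarrow> \<phi> r \<in> prop_of L UNIV p)"

definition embeds :: "(real^'d \<Rightarrow> ('y::finite \<Rightarrow> real)) \<Rightarrow> ('r \<Rightarrow> ('y \<Rightarrow> real)) \<Rightarrow> 'r set \<Rightarrow> bool" where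
  "embeds L l R \<longleftrightarrow> (\<exists>S \<phi>. representative l R S \<and> embeds_via L l R S \<phi>)"

definition tightly_embeds :: "(real^'d \<Rightarrow> ('y::finite \<Rightarrow> real)) \<Rightarrow> ('r \<Rightarrow> ('y \<Rightarrow> real)) \<Rightarrow> 'r set \<Rightarrow> bool" where
  "tightly_embeds L l R \<longleftrightarrow> (\<exists>S \<phi>. min_representative l R S \<and> embeds_via L l R S \<phi>)"

end

theory Submission
  imports Defs
begin

lemma core:
  fixes L :: "real^'d \<Rightarrow> ('y::finite \<Rightarrow> real)"
  assumes A: "\<And>y. finite (A y)" "\<And>y. A y \<noteq> {}"
    "\<And>y u. L u y = Max ((\<lambda>(a, b). a \<bullet> u + b) ` A y)"
  and same: "\<And>y. {ab\<in>A y. (case ab of (a,b) \<Rightarrow> a \<bullet> u + b) = L u y}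
                 = {ab\<in>A y. (case ab of (a,b) \<Rightarrow> a \<bullet> v + b) = L v y}"
  and opt: "u \<in> prop_of L UNIV p"
  shows "v \<in> prop_of L UNIV p"
proof -
  define val where "val ab x = (case ab of (a,b) \<Rightarrow> a \<bullet> x + b)" for ab and x :: "real^'d"
  have LM: "L x y = Max ((\<lambda>ab. val ab x) ` A y)" for x y
    using A(3)[of x y] unfolding val_def by (simp add: case_prod_beta)
  have ge: "val ab x \<le> L x y" if "ab \<in> A y" for ab x y
    unfolding LM using A(1) that by auto
  have "\<forall>y. \<exists>ab\<in>A y. val ab u = L u y"
  proof
    fix y
    have "L u y \<in> (\<lambda>ab. val ab u) ` A y" unfolding LM using A(1,2) by (intro Max_in) auto
    then show "\<exists>ab\<in>A y. val ab u = L u y" by auto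
  qed
  then obtain c where c: "\<And>y. c y \<in> A y" "\<And>y. val (c y) u = L u y" by metis
  have same': "\<And>y ab. ab \<in> A y \<Longrightarrow> val ab u = L u y \<longleftrightarrow> val ab v = L v y"
    using same unfolding val_def by blast
  have cv: "val (c y) v = L v y" for y using same' c by blast
  define w where "w t = u + t *\<^sub>R (u - v)" for t :: real
  have lin: "val ab (w t) = val ab u + t * (val ab u - val ab v)" for ab t
    unfolding val_def w_def by (cases ab) (simp add: inner_add_right inner_diff_right algebra_simps)
  have ev: "\<forall>\<^sub>F t in at_right 0. \<forall>y. \<forall>ab\<in>A y. val ab (w t) \<le> val (c y) (w t)"
  proof (intro eventually_all_finite allI eventually_ball_finite A(1) ballI)
    fix y ab assume ab: "ab \<in> A y"
    define du where "du = val ab u - L u y"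
    define dv where "dv = val ab v - L v y"
    have key: "val ab (w t) \<le> val (c y) (w t) \<longleftrightarrow> du + t * (du - dv) \<le> 0" for t
      unfolding lin c cv du_def dv_def by (simp add: algebra_simps)
    show "\<forall>\<^sub>F t in at_right 0. val ab (w t) \<le> val (c y) (w t)"
    proof (cases "du = 0")
      case True
      then have "dv = 0" using same'[OF ab] unfolding du_def dv_def by simp
      then show ?thesis using True key by simp
    next
      case False
      then have "du < 0" using ge[OF ab, of u] unfolding du_def by simp
      moreover have "((\<lambda>t. du + t * (du - dv)) \<longlongrightarrow> du + 0 * (du - dv)) (at_right 0)"
        by (intro tendsto_intros)
      ultimately have "\<forall>\<^sub>F t in at_right 0. du + t * (du - dv) < 0"
        using order_tendstoD(2) by fastforce
      then show ?thesis by eventually_elim (simp add: key)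
    qed
  qed
  then have ev2: "\<forall>\<^sub>F t in at_right 0. (0::real) < t \<and> (\<forall>y. \<forall>ab\<in>A y. val ab (w t) \<le> val (c y) (w t))"
    using eventually_at_right_less eventually_conj by blast
  have "\<exists>t. (0::real) < t \<and> (\<forall>y. \<forall>ab\<in>A y. val ab (w t) \<le> val (c y) (w t))"
    using eventually_happens[OF ev2] by simp
  then obtain t where t: "t > 0" "\<And>y ab. ab \<in> A y \<Longrightarrow> val ab (w t) \<le> val (c y) (w t)"
    by blast
  have Lw: "L (w t) y = L u y + t * (L u y - L v y)" for y
  proof -
    have "L (w t) y = val (c y) (w t)"
      unfolding LM using A(1) c(1) t(2) by (intro Max_eqI) auto
    then show ?thesis using lin c(2) cv by simp
  qed
  have Ew: "exp_loss p (L (w t)) = exp_loss p (L u) + t * (exp_loss p (L u) - exp_loss p (L v))"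
    unfolding exp_loss_def Lw
    by (simp add: algebra_simps sum.distrib sum_subtractf sum_distrib_left)
  have "exp_loss p (L u) \<le> exp_loss p (L (w t))" using opt unfolding prop_of_def by auto
  then have "0 \<le> t * (exp_loss p (L u) - exp_loss p (L v))" using Ew by simp
  then have "exp_loss p (L v) \<le> exp_loss p (L u)" using t(1)
    by (simp add: zero_le_mult_iff)
  then show ?thesis using opt unfolding prop_of_def by (auto intro: order_trans)
qed


lemma simplex_ne: "(\<lambda>y. 1 / real CARD('y::finite)) \<in> (prob_simplex :: ('y \<Rightarrow> real) set)"
  unfolding prob_simplex_def by simp

lemma polyhedral_finite_rep:
  fixes L :: "real^'d \<Rightarrow> ('y::finite \<Rightarrow> real)"
  assumes "polyhedral L" and minL: "minimizable L UNIV"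
  shows "\<exists>S. representative L UNIV S \<and> finite S"
proof -
  have "\<forall>y. \<exists>A :: ((real^'d) \<times> real) set. finite A \<and> A \<noteq> {} \<and>
          (\<forall>u. L u y = Max ((\<lambda>(a, b). a \<bullet> u + b) ` A))"
    using assms(1) unfolding polyhedral_def by blast
  then obtain A where A: "\<And>y. finite (A y)" "\<And>y. A y \<noteq> {}"
    "\<And>y u. L u y = Max ((\<lambda>(a, b). a \<bullet> u + b) ` A y)" by metis
  define sig where "sig u = (\<lambda>y. {ab\<in>A y. (case ab of (a,b) \<Rightarrow> a \<bullet> u + b) = L u y})" for u
  define rep where "rep u = (SOME v. sig v = sig u)" for u
  have srep: "sig (rep u) = sig u" for u unfolding rep_def by (rule someI) simp
  have "range sig \<subseteq> Pi\<^sub>E UNIV (\<lambda>y. Pow (A y))"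
    unfolding PiE_UNIV_domain sig_def by auto
  moreover have "finite (Pi\<^sub>E UNIV (\<lambda>y. Pow (A y)))" using A(1) by (intro finite_PiE) auto
  ultimately have fs: "finite (range sig)" by (rule finite_subset)
  have "range rep = (\<lambda>s. SOME v. sig v = s) ` range sig" unfolding rep_def by auto
  then have fin: "finite (range rep)" using fs by simp
  have "representative L UNIV (range rep)"
    unfolding representative_def
  proof (rule conjI[OF subset_UNIV], intro ballI notI)
    fix p :: "'y \<Rightarrow> real" assume p: "p \<in> prob_simplex" and e: "prop_of L UNIV p \<inter> range rep = {}"
    obtain u where u: "u \<in> prop_of L UNIV p" using minL p unfolding minimizable_def prop_of_def by auto
    have eq: "\<And>y. {ab\<in>A y. (case ab of (a,b) \<Rightarrow> a \<bullet> u + b) = L u y}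
                 = {ab\<in>A y. (case ab of (a,b) \<Rightarrow> a \<bullet> rep u + b) = L (rep u) y}"
      using fun_cong[OF srep[of u], unfolded sig_def] by simp
    have "rep u \<in> prop_of L UNIV p" by (rule core[OF A eq u])
    then show False using e by auto
  qed
  then show ?thesis using fin by blast
qed

lemma avg_exp:
  fixes q :: "'r \<Rightarrow> ('y::finite \<Rightarrow> real)"
  shows "exp_loss (\<lambda>y. (\<Sum>r\<in>S. q r y) / real (card S)) v = (\<Sum>r\<in>S. exp_loss (q r) v) / real (card S)"
proof -
  have "exp_loss (\<lambda>y. (\<Sum>r\<in>S. q r y) / real (card S)) v = (\<Sum>y\<in>UNIV. \<Sum>r\<in>S. q r y * v y) / real (card S)"
    unfolding exp_loss_def by (simp add: sum_divide_distrib sum_distrib_right)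
  also have "(\<Sum>y\<in>UNIV. \<Sum>r\<in>S. q r y * v y) = (\<Sum>r\<in>S. \<Sum>y\<in>UNIV. q r y * v y)" by (rule sum.swap)
  finally show ?thesis unfolding exp_loss_def .
qed

theorem lemma4:
  fixes L :: "real^'d \<Rightarrow> ('y::finite \<Rightarrow> real)"
    and \<gamma> :: "('y \<Rightarrow> real) \<Rightarrow> 'b set"
  assumes "polyhedral L"
    and "is_property \<gamma>"
  shows "indirectly_elicits L UNIV \<gamma> \<longleftrightarrow>
    (\<exists>(l :: nat \<Rightarrow> ('y \<Rightarrow> real)) (R :: nat set).
        discrete_loss l R \<and> tightly_embeds L l R \<and> indirectly_elicits l R \<gamma>)"
proof
  assume ie: "indirectly_elicits L UNIV \<gamma>"
  then have minL: "minimizable L UNIV" unfolding indirectly_elicits_def by simp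
  obtain S0 where "representative L UNIV S0 \<and> finite S0"
    using polyhedral_finite_rep[OF assms(1) minL] by blast
  then obtain S where S: "representative L UNIV S" "finite S"
    and Smin: "\<And>S'. representative L UNIV S' \<and> finite S' \<Longrightarrow> card S \<le> card S'"
    using ex_has_least_nat[of "\<lambda>S. representative L UNIV S \<and> finite S" S0 card] by blast
  obtain f where f: "bij_betw f {0..<card S} S" using ex_bij_betw_nat_finite[OF S(2)] by blast
  define R where "R = {0..<card S}"
  define l where "l i = L (f i)" for i
  have fR: "f ` R = S" using f unfolding R_def bij_betw_def by simp
  have injf: "inj_on f R" using f unfolding R_def bij_betw_def by simp
  have K: "i \<in> prop_of l R p \<longleftrightarrow> f i \<in> prop_of L UNIV p" if p: "p \<in> prob_simplex" and i: "i \<in> R" for p i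
  proof
    assume "f i \<in> prop_of L UNIV p" then show "i \<in> prop_of l R p"
      using i unfolding prop_of_def l_def by auto
  next
    assume a: "i \<in> prop_of l R p"
    obtain s where s: "s \<in> S" "s \<in> prop_of L UNIV p" using S(1) p unfolding representative_def by blast
    then obtain j where j: "j \<in> R" "s = f j" using fR by blast
    have "exp_loss p (L (f i)) \<le> exp_loss p (L (f j))" using a j unfolding prop_of_def l_def by auto
    then show "f i \<in> prop_of L UNIV p" using s j unfolding prop_of_def by (auto intro: order_trans)
  qed
  have Sne: "S \<noteq> {}" using S(1) simplex_ne unfolding representative_def by blast
  have repR: "representative l R R"
    unfolding representative_def
  proof safe
    fix p assume p: "p \<in> prob_simplex" and e: "prop_of l R p \<inter> R = {}"
    obtain s where s: "s \<in> S" "s \<in> prop_of L UNIV p" using S(1) p unfolding representative_def by blast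
    then obtain j where j: "j \<in> R" "s = f j" using fR by blast
    then show False using K[OF p j(1)] s e by auto
  qed
  have minrep: "min_representative l R R"
    unfolding min_representative_def
  proof (intro conjI allI impI)
    show "representative l R R" by (rule repR)
    show "finite R" unfolding R_def by simp
    fix S' assume S': "representative l R S'"
    then have S'R: "S' \<subseteq> R" unfolding representative_def by simp
    then have fS': "finite S'" unfolding R_def using finite_subset by blast
    have "representative L UNIV (f ` S')"
      unfolding representative_def
    proof (rule conjI[OF subset_UNIV], intro ballI notI)
      fix p assume p: "p \<in> prob_simplex" and e: "prop_of L UNIV p \<inter> f ` S' = {}"
      obtain i where "i \<in> prop_of l R p" "i \<in> S'" using S' p unfolding representative_def by blast
      then show False using K[OF p] S'R e by blast
    qed
    then have "card S \<le> card (f ` S')" using Smin fS' by blast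
    also have "\<dots> \<le> card S'" using fS' by (rule card_image_le)
    finally show "card R \<le> card S'" unfolding R_def by simp
  qed
  have emb: "embeds_via L l R R f"
    unfolding embeds_via_def using injf K by (simp add: l_def)
  have disc: "discrete_loss l R"
    unfolding discrete_loss_def nonneg_loss_def R_def l_def
    using assms(1) Sne S(2) unfolding polyhedral_def nonneg_loss_def by auto
  have iel: "indirectly_elicits l R \<gamma>"
    unfolding indirectly_elicits_def
  proof
    show "minimizable l R" unfolding minimizable_def
      using repR unfolding representative_def prop_of_def by blast
    show "\<forall>r\<in>R. \<exists>r'. level_set (prop_of l R) r \<subseteq> level_set \<gamma> r'"
    proof
      fix i assume i: "i \<in> R"
      obtain r' where r': "level_set (prop_of L UNIV) (f i) \<subseteq> level_set \<gamma> r'"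
        using ie unfolding indirectly_elicits_def by blast
      have "level_set (prop_of l R) i \<subseteq> level_set (prop_of L UNIV) (f i)"
        using K i unfolding level_set_def by auto
      then show "\<exists>r'. level_set (prop_of l R) i \<subseteq> level_set \<gamma> r'" using r' by blast
    qed
  qed
  show "\<exists>(l :: nat \<Rightarrow> ('y \<Rightarrow> real)) (R :: nat set).
        discrete_loss l R \<and> tightly_embeds L l R \<and> indirectly_elicits l R \<gamma>"
    using disc minrep emb iel unfolding tightly_embeds_def by blast
next
  assume "\<exists>(l :: nat \<Rightarrow> ('y \<Rightarrow> real)) (R :: nat set).
        discrete_loss l R \<and> tightly_embeds L l R \<and> indirectly_elicits l R \<gamma>"
  then obtain l :: "nat \<Rightarrow> ('y \<Rightarrow> real)" and R S \<phi> where
    mr: "min_representative l R S" and em: "embeds_via L l R S \<phi>" and iel: "indirectly_elicits l R \<gamma>"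
    unfolding tightly_embeds_def by blast
  have rep: "representative l R S" and finS: "finite S" using mr unfolding min_representative_def by auto
  have SR: "S \<subseteq> R" using rep unfolding representative_def by simp
  have E: "\<And>p r. p \<in> prob_simplex \<Longrightarrow> r \<in> S \<Longrightarrow> r \<in> prop_of l R p \<longleftrightarrow> \<phi> r \<in> prop_of L UNIV p"
    using em unfolding embeds_via_def by blast
  have ex: "\<exists>r\<in>S. \<phi> r \<in> prop_of L UNIV p" if p: "p \<in> prob_simplex" for p
  proof -
    obtain r where "r \<in> prop_of l R p" "r \<in> S" using rep p unfolding representative_def by blast
    then show ?thesis using E[OF p] by blast
  qed
  have Sne: "S \<noteq> {}" using ex[OF simplex_ne] by blast
  have minL: "minimizable L UNIV"
    unfolding minimizable_def using ex unfolding prop_of_def by blast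
  have cover: "\<exists>r\<in>S. level_set (prop_of L UNIV) u \<subseteq> level_set (prop_of L UNIV) (\<phi> r)" for u
  proof (rule ccontr)
    assume neg: "\<not> ?thesis"
    have ex2: "\<forall>r\<in>S. \<exists>q. q \<in> level_set (prop_of L UNIV) u \<and> q \<notin> level_set (prop_of L UNIV) (\<phi> r)"
    proof
      fix r assume "r \<in> S"
      with neg have "\<not> level_set (prop_of L UNIV) u \<subseteq> level_set (prop_of L UNIV) (\<phi> r)" by blast
      then show "\<exists>q. q \<in> level_set (prop_of L UNIV) u \<and> q \<notin> level_set (prop_of L UNIV) (\<phi> r)"
        unfolding subset_iff by blast
    qed
    obtain q where q0: "\<forall>r\<in>S. q r \<in> level_set (prop_of L UNIV) u \<and> q r \<notin> level_set (prop_of L UNIV) (\<phi> r)"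
      using bchoice[OF ex2] by blast
    then have q: "\<And>r. r \<in> S \<Longrightarrow> q r \<in> level_set (prop_of L UNIV) u"
      "\<And>r. r \<in> S \<Longrightarrow> q r \<notin> level_set (prop_of L UNIV) (\<phi> r)" by auto
    have qs: "q r \<in> prob_simplex" if "r \<in> S" for r using q(1)[OF that] unfolding level_set_def by simp
    have qu: "exp_loss (q r) (L u) \<le> exp_loss (q r) (L x)" if "r \<in> S" for r x
      using q(1)[OF that] unfolding level_set_def prop_of_def by simp
    define p where "p y = (\<Sum>r\<in>S. q r y) / real (card S)" for y
    have cpos: "real (card S) > 0" using finS Sne by (simp add: card_gt_0_iff)
    have "p \<in> prob_simplex"
    proof -
      have "(\<Sum>y\<in>UNIV. \<Sum>r\<in>S. q r y) = (\<Sum>r\<in>S. \<Sum>y\<in>UNIV. q r y)" by (rule sum.swap)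
      also have "\<dots> = (\<Sum>r\<in>S. 1)" using qs unfolding prob_simplex_def by (intro sum.cong) auto
      finally have "(\<Sum>y\<in>UNIV. p y) = 1" unfolding p_def using cpos
        by (simp add: sum_divide_distrib[symmetric])
      moreover have "0 \<le> p y" for y unfolding p_def using qs
        by (intro divide_nonneg_nonneg sum_nonneg) (auto simp: prob_simplex_def)
      ultimately show ?thesis unfolding prob_simplex_def by auto
    qed
    then obtain r0 where r0: "r0 \<in> S" "\<phi> r0 \<in> prop_of L UNIV p" using ex by blast
    have "exp_loss p (L (\<phi> r0)) \<le> exp_loss p (L u)" using r0(2) unfolding prop_of_def by simp
    then have "(\<Sum>r\<in>S. exp_loss (q r) (L (\<phi> r0))) \<le> (\<Sum>r\<in>S. exp_loss (q r) (L u))"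
      unfolding p_def avg_exp using cpos by (simp add: divide_le_cancel)
    then have "(\<Sum>r\<in>S. exp_loss (q r) (L (\<phi> r0)) - exp_loss (q r) (L u)) \<le> 0"
      by (simp add: sum_subtractf)
    moreover have nn: "\<forall>r\<in>S. 0 \<le> exp_loss (q r) (L (\<phi> r0)) - exp_loss (q r) (L u)" using qu by simp
    ultimately have "(\<Sum>r\<in>S. exp_loss (q r) (L (\<phi> r0)) - exp_loss (q r) (L u)) = 0"
    proof -
      have "0 \<le> (\<Sum>r\<in>S. exp_loss (q r) (L (\<phi> r0)) - exp_loss (q r) (L u))"
        using nn by (intro sum_nonneg) blast
      then show ?thesis using \<open>(\<Sum>r\<in>S. exp_loss (q r) (L (\<phi> r0)) - exp_loss (q r) (L u)) \<le> 0\<close> by linarith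
    qed
    moreover have z: "(\<Sum>r\<in>S. exp_loss (q r) (L (\<phi> r0)) - exp_loss (q r) (L u)) = 0 \<longleftrightarrow>
        (\<forall>r\<in>S. exp_loss (q r) (L (\<phi> r0)) - exp_loss (q r) (L u) = 0)"
      by (rule sum_nonneg_eq_0_iff[OF finS]) (use nn in blast)
    ultimately have "\<forall>r\<in>S. exp_loss (q r) (L (\<phi> r0)) - exp_loss (q r) (L u) = 0"
      by (rule iffD1[rotated])
    then have eq0: "exp_loss (q r0) (L (\<phi> r0)) = exp_loss (q r0) (L u)" using r0(1) by simp
    have "\<forall>x. exp_loss (q r0) (L (\<phi> r0)) \<le> exp_loss (q r0) (L x)"
    proof
      fix x show "exp_loss (q r0) (L (\<phi> r0)) \<le> exp_loss (q r0) (L x)"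
        unfolding eq0 by (rule qu[OF r0(1)])
    qed
    then have "q r0 \<in> level_set (prop_of L UNIV) (\<phi> r0)"
      using qs[OF r0(1)] unfolding level_set_def prop_of_def by blast
    then show False using q(2)[OF r0(1)] by blast
  qed
  show "indirectly_elicits L UNIV \<gamma>"
    unfolding indirectly_elicits_def
  proof (intro conjI minL ballI)
    fix u :: "real^'d"
    obtain r where r: "r \<in> S" "level_set (prop_of L UNIV) u \<subseteq> level_set (prop_of L UNIV) (\<phi> r)"
      using cover by blast
    obtain r' where r': "level_set (prop_of l R) r \<subseteq> level_set \<gamma> r'"
      using iel r(1) SR unfolding indirectly_elicits_def by blast
    have "level_set (prop_of L UNIV) (\<phi> r) \<subseteq> level_set (prop_of l R) r"
      using E r(1) unfolding level_set_def by auto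
    then show "\<exists>r'. level_set (prop_of L UNIV) u \<subseteq> level_set \<gamma> r'" using r r' by blast
  qed
qed

end
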